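(* Consider the semi-discrete Hermite–DG Vlasov–Maxwell system $\frac{dy}{dt}=\mathcal{F}^N(y)$ on $\mathbb{R}^M$ described in the context, obtained with upwind numerical fluxes in the DG discretization of Maxwell's equations, with initial condition $y(0)$. Let $\{y^\tau\}_{\tau=1,\dots,T/\Delta t}$ be the sequence of approximate solutions produced by the ${N_{GL}}$-stage Gauss–Legendre method with step $\Delta t$ and $y^0=y(0)$, with stages $\mathcal{Y}_i$ and weights $b_i$. Then for every $\tau$, $$\mathcal{E}_{\mathbf{tot}}(y^{\tau+1})-\mathcal{E}_{\mathbf{tot}}(y^\tau)+\Delta t\sum_{i=1}^{{N_{GL}}}b_i\,\mathcal{E}_{\mathbf{bnd}}(\mathcal{Y}_i)\le 0.$$
   Context: Setting: the Vlasov–Maxwell system for $N_s$ plasma species with masses $m^s$, charges $q^s$, on a spatial domain $\Omega_x\subset\mathbb{R}^3$ partitioned into a uniform mesh of hexahedral cells $I$ with faces $\mathsf{f}$, and velocity space $\mathbb{R}^3$. In the Hermite–DG semi-discretization each distribution function is approximated as $f^{s,N}(x,v,t)=\sum_{n,m,p}\sum_{I,l}C^{s,I,l}_{n,m,p}(t)\Psi_{n,m,p}(\xi^s)\varphi^{I,l}(x)$ (asymmetrically weighted Hermite functions in velocity, piecewise polynomials of degree $\le N_{DG}$ on each cell in space) and the electromagnetic fields as piecewise polynomials $E^N(x,t)=\sum_{I,l}E^{I,l}(t)\varphi^{I,l}(x)$, $B^N(x,t)=\sum_{I,l}B^{I,l}(t)\varphi^{I,l}(x)$; the Vlasov equation uses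 upwind fluxes. The vector $y(t)\in\mathbb{R}^M$ of all coefficients $C^{s,I,l}_{n,m,p},E^{I,l},B^{I,l}$ satisfies an autonomous ODE $dy/dt=\mathcal{F}^N(y)$. Energies: $\mathcal{E}_{\mathbf{kin}}(y)=\frac12\sum_s m^s\sum_I\int_I\int_{\mathbb{R}^3}|v|^2f^{s,N}\,dv\,dx$ (linear in $y$); $\mathcal{E}_{E,B}(y)=\frac12(\omega_{ce}/\omega_{pe})^2\sum_I\int_I(|E^N|^2+|B^N|^2)\,dx$ (a quadratic form $y^\top Sy$ with $S$ symmetric); total energy $\mathcal{E}_{\mathbf{tot}}=\mathcal{E}_{\mathbf{kin}}+\mathcal{E}_{E,B}$; boundary energy flux $\mathcal{E}_{\mathbf{bnd}}(y)=\frac12\sum_s m^s\int_{\partial\Omega_x}\int_{\mathbb{R}^3}(n\cdot v)|v|^2f^{s,N}\,dv\,dS$ with $n$ the outward unit normal; jump term $\mathcal{E}_{\mathbf{jump}}(y)=(\omega_{ce}/\omega_{pe})^2\sum_{\mathsf{f}}\frac12\int_{\mathsf{f}}[\![U]\!]_{\mathsf{f}}^\top|\mathbb{F}|[\![U]\!]_{\mathsf{f}}\,dS\ge0$ for upwind Maxwell fluxes, where $U=(E^N,B^N)$, $[\![U]\!]_{\mathsf{f}}$ is its jump across face $\mathsf{f}$ and $|\mathbb{F}|$ is the fixed symmetric positive semidefinite matrix given by the sum of the absolute values of the Maxwell flux matrices. The semi-discrete system satisfies the energy law: along every solution, $\frac{d}{dt}\mathcal{E}_{\mathbf{tot}}(y(t))+\mathcal{E}_{\mathbf{bnd}}(y(t))=-\mathcal{E}_{\mathbf{jump}}(y(t))\le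 0$, for every $y(t)\in\mathbb{R}^M$. The ${N_{GL}}$-stage Gauss–Legendre method is the implicit Runge–Kutta method $\mathcal{Y}_i=y^\tau+\Delta t\sum_{j=1}^{{N_{GL}}}a_{ij}\mathcal{F}^N(\mathcal{Y}_j)$, $y^{\tau+1}=y^\tau+\Delta t\sum_i b_i\mathcal{F}^N(\mathcal{Y}_i)$, with $c_i$ the Gauss–Legendre nodes on $[0,1]$, $q_i(\sigma)=\prod_{j\neq i}(\sigma-c_j)$, $a_{ij}=\int_0^{c_i}q_j/q_j(c_j)$, $b_i=\int_0^1 q_i/q_i(c_i)$. *)

theory Defs
  imports "HOL-Analysis.Analysis"
begin

definition shifted_legendre :: "nat \<Rightarrow> real \<Rightarrow> real" where
  "shifted_legendre s x =
     (\<Sum>k\<le>s. (-1)^(s+k) * real (s choose k) * real ((s+k) choose k) * x^k)"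

definition gl_nodes :: "nat \<Rightarrow> (nat \<Rightarrow> real) \<Rightarrow> bool" where
  "gl_nodes s c \<longleftrightarrow> strict_mono_on {..<s} c \<and> (\<forall>i<s. shifted_legendre s (c i) = 0)"

definition lagr_q :: "nat \<Rightarrow> (nat \<Rightarrow> real) \<Rightarrow> nat \<Rightarrow> real \<Rightarrow> real" where
  "lagr_q s c i \<sigma> = (\<Prod>j\<in>{..<s} - {i}. \<sigma> - c j)"

definition gl_a :: "nat \<Rightarrow> (nat \<Rightarrow> real) \<Rightarrow> nat \<Rightarrow> nat \<Rightarrow> real" where
  "gl_a s c i j = integral {0..c i} (\<lambda>\<sigma>. lagr_q s c j \<sigma> / lagr_q s c j (c j))"

definition gl_b :: "nat \<Rightarrow> (nat \<Rightarrow> real) \<Rightarrow> nat \<Rightarrow> real" where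
  "gl_b s c i = integral {0..1} (\<lambda>\<sigma>. lagr_q s c i \<sigma> / lagr_q s c i (c i))"

end

theory Submission
  imports Defs "HOL-Computational_Algebra.Polynomial"
begin


definition J :: "real poly \<Rightarrow> real" where
  "J p = integral {0..1} (poly p)"

lemma poly_integrable[simp]: "poly (p::real poly) integrable_on {a..b}"
  by (intro integrable_continuous_interval continuous_intros)

lemma J_add: "J (p + q) = J p + J q"
  unfolding J_def poly_add by (rule integral_add) auto

lemma J_diff: "J (p - q) = J p - J q"
  unfolding J_def poly_diff by (rule integral_diff) auto

lemma J_smult: "J (smult a p) = a * J p"
  unfolding J_def poly_smult by (rule integral_mult_right)

lemma J_0[simp]: "J 0 = 0"
proof -
  have "poly (0::real poly) = (\<lambda>x. 0)" by auto
  then show ?thesis by (simp add: J_def)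
qed

lemma J_sum: "finite A \<Longrightarrow> J (\<Sum>i\<in>A. f i) = (\<Sum>i\<in>A. J (f i))"
  by (induction A rule: finite_induct) (auto simp: J_add)

lemma integral_pderiv:
  fixes p :: "real poly"
  assumes "a \<le> b"
  shows "integral {a..b} (poly (pderiv p)) = poly p b - poly p a"
proof -
  have "(poly (pderiv p) has_integral (poly p b - poly p a)) {a..b}"
    apply (rule fundamental_theorem_of_calculus[OF assms])
    apply (rule has_real_derivative_iff_has_vector_derivative[THEN iffD1])
    apply (rule DERIV_subset[OF poly_DERIV]) by auto
  then show ?thesis by (rule integral_unique)
qed

lemma J_pderiv: "J (pderiv p) = poly p 1 - poly p 0"
  unfolding J_def by (rule integral_pderiv) simp

lemma J_ibp: "J (pderiv f * g) = poly f 1 * poly g 1 - poly f 0 * poly g 0 - J (f * pderiv g)"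
proof -
  have "J (pderiv (f * g)) = J (f * pderiv g) + J (pderiv f * g)"
    by (simp add: pderiv_mult J_add mult.commute)
  then show ?thesis by (simp add: J_pderiv)
qed

lemma dvd_pderiv_lin:
  fixes p :: "real poly"
  assumes "[:-a,1:] ^ Suc n dvd p" shows "[:-a,1:] ^ n dvd pderiv p"
proof -
  obtain r where r: "p = [:-a,1:] ^ Suc n * r" using assms by (auto simp: dvd_def)
  have e: "pderiv p = [:-a,1:] ^ Suc n * pderiv r + r * (smult (of_nat (Suc n)) ([:-a,1:] ^ n) * pderiv [:-a,1:])"
    by (simp only: r pderiv_mult pderiv_power_Suc)
  have t1: "[:-a,1:] ^ n dvd [:-a,1:] ^ Suc n * pderiv r"
    by (rule dvd_mult2[OF le_imp_power_dvd]) simp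
  have t2: "[:-a,1:] ^ n dvd r * (smult (of_nat (Suc n)) ([:-a,1:] ^ n) * pderiv [:-a,1:])"
    by (rule dvd_mult[OF dvd_mult2[OF dvd_smult[OF dvd_refl]]])
  show ?thesis unfolding e by (rule dvd_add[OF t1 t2])
qed

lemma dvd_higher_pderiv_lin:
  fixes p :: "real poly"
  assumes "[:-a,1:] ^ n dvd p" "j \<le> n" shows "[:-a,1:] ^ (n - j) dvd (pderiv ^^ j) p"
  using assms(2)
proof (induction j)
  case 0 then show ?case using assms(1) by simp
next
  case (Suc j)
  have "Suc (n - Suc j) = n - j" using Suc.prems by simp
  then have "[:-a,1:] ^ Suc (n - Suc j) dvd (pderiv ^^ j) p"
    using Suc.IH Suc.prems by simp
  then have "[:-a,1:] ^ (n - Suc j) dvd pderiv ((pderiv ^^ j) p)" by (rule dvd_pderiv_lin)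
  then show ?case by simp
qed

lemma poly_lin_pow_dvd_zero:
  fixes p :: "real poly"
  assumes "[:-a,1:] ^ n dvd p" "n \<ge> 1" shows "poly p a = 0"
proof -
  obtain r where r: "p = [:-a,1:] ^ n * r" using assms by (auto simp: dvd_def)
  obtain m where m: "n = Suc m" using assms(2) by (cases n) auto
  show ?thesis unfolding r m by simp
qed

definition W :: "nat \<Rightarrow> real poly" where
  "W s = [:0,1:] ^ s * [:-1,1:] ^ s"

lemma W_bnd:
  assumes "j < s"
  shows "poly ((pderiv ^^ j) (W s)) 0 = 0" "poly ((pderiv ^^ j) (W s)) 1 = 0"
proof -
  have j: "j \<le> s" "s - j \<ge> 1" using assms by auto
  have "[:-0,1:] ^ s dvd W s" unfolding W_def by simp
  from poly_lin_pow_dvd_zero[OF dvd_higher_pderiv_lin[OF this j(1)] j(2)]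
  show "poly ((pderiv ^^ j) (W s)) 0 = 0" .
  have "[:-1,1:] ^ s dvd W s" unfolding W_def by simp
  from poly_lin_pow_dvd_zero[OF dvd_higher_pderiv_lin[OF this j(1)] j(2)]
  show "poly ((pderiv ^^ j) (W s)) 1 = 0" .
qed

lemma W_ibp:
  assumes "k \<le> s"
  shows "J ((pderiv ^^ s) (W s) * q) = (-1) ^ k * J ((pderiv ^^ (s - k)) (W s) * (pderiv ^^ k) q)"
  using assms
proof (induction k)
  case 0 then show ?case by simp
next
  case (Suc k)
  define f where "f = (pderiv ^^ (s - Suc k)) (W s)"
  have e: "(pderiv ^^ (s - k)) (W s) = pderiv f"
    unfolding f_def using Suc.prems by (metis Suc_diff_Suc Suc_le_lessD funpow.simps(2) o_apply)
  have b0: "poly f 0 = 0" "poly f 1 = 0" unfolding f_def using W_bnd Suc.prems by auto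
  have "J ((pderiv ^^ (s - k)) (W s) * (pderiv ^^ k) q) = - J (f * (pderiv ^^ Suc k) q)"
    unfolding e J_ibp by (simp add: b0)
  then show ?case using Suc by (simp add: f_def)
qed

lemma higher_pderiv_small: "degree q < k \<Longrightarrow> (pderiv ^^ k) (q::real poly) = 0"
proof (induction k arbitrary: q)
  case 0 then show ?case by simp
next
  case (Suc k)
  show ?case
  proof (cases "degree q = 0")
    case True
    then have "pderiv q = 0" by (simp add: pderiv_eq_0_iff)
    then show ?thesis by (simp add: funpow_Suc_right del: funpow.simps)
  next
    case False
    then have "degree (pderiv q) < k" using Suc.prems by (simp add: degree_pderiv)
    then show ?thesis using Suc.IH by (simp add: funpow_Suc_right del: funpow.simps)
  qed
qed

lemma W_orth:
  assumes "degree q < s"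
  shows "J ((pderiv ^^ s) (W s) * q) = 0"
proof -
  have "poly (0::real poly) = (\<lambda>x. 0)" by auto
  then show ?thesis using W_ibp[of s s q] higher_pderiv_small[OF assms] by (simp add: J_def)
qed

lemma neg1_pow_diff: "k \<le> s \<Longrightarrow> (-1::real) ^ (s - k) = (-1) ^ (s + k)"
proof -
  assume "k \<le> s"
  then obtain d where d: "s = k + d" using le_Suc_ex by blast
  have "(-1::real)^(k+d+k) = (-1)^d * ((-1)^k * (-1)^k)" by (simp add: power_add mult_ac)
  also have "(-1::real)^k * (-1)^k = 1" by (simp flip: power_mult_distrib)
  finally show ?thesis using d by simp
qed

lemma poch_fact: "pochhammer (real (Suc n)) s = fact s * real ((n + s) choose n)"
proof -
  have "fact (n + s) = (fact n :: real) * pochhammer (real (Suc n)) s"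
    using pochhammer_product'[of "1::real" n s] by (simp add: pochhammer_fact add.commute)
  moreover have "fact n * fact s * real ((n + s) choose n) = (fact (n + s) :: real)"
    using binomial_fact_lemma[of n "n + s"] by (metis add_diff_cancel_left' le_add1 of_nat_fact of_nat_mult)
  ultimately show ?thesis by (simp add: mult.assoc)
qed

lemma degree_W: "degree (W s) = 2 * s"
  unfolding W_def by (subst degree_mult_eq) (auto simp: degree_linear_power degree_power_eq)

lemma coeff_D: "k \<le> s \<Longrightarrow> coeff ((pderiv ^^ s) (W s)) k =
   fact s * ((-1) ^ (s + k) * real (s choose k) * real ((s + k) choose k))"
proof -
  assume k: "k \<le> s"
  have x: "[:0,1:] ^ s = monom (1::real) s" by (simp add: monom_altdef)
  have "coeff (W s) (k + s) = coeff ([:-1,1:] ^ s) k"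
    unfolding W_def x coeff_monom_mult by simp
  also have "\<dots> = real (s choose k) * (-1) ^ (s - k)"
    using k by (simp add: coeff_linear_poly_power)
  finally have cw: "coeff (W s) (k + s) = real (s choose k) * (-1) ^ (s - k)" .
  have "coeff ((pderiv ^^ s) (W s)) k = pochhammer (of_nat (Suc k)) s * coeff (W s) (k + s)"
    by (rule coeff_higher_pderiv)
  also have "\<dots> = fact s * real ((k + s) choose k) * (real (s choose k) * (-1) ^ (s + k))"
    unfolding cw poch_fact neg1_pow_diff[OF k] by simp
  finally show ?thesis by (simp add: add.commute mult_ac)
qed

lemma poly_D: "poly ((pderiv ^^ s) (W s)) x = fact s * shifted_legendre s x"
proof -
  have dg: "degree ((pderiv ^^ s) (W s)) = s" by (simp add: degree_higher_pderiv degree_W)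
  show ?thesis
    unfolding poly_altdef dg shifted_legendre_def sum_distrib_left
    by (rule sum.cong) (auto simp: coeff_D mult_ac)
qed

lemma degree_D: "degree ((pderiv ^^ s) (W s)) = s"
  by (simp add: degree_higher_pderiv degree_W)

lemma e1: "(-1::real)^s * (-1)^(s+k) = (-1)^k"
proof -
  have "(-1::real)^s * (-1)^(s+k) = ((-1)^s * (-1)^s) * (-1)^k" by (simp only: power_add mult.assoc)
  also have "(-1::real)^s * (-1)^s = 1" by (simp only: power_mult_distrib[symmetric]) simp
  finally show ?thesis by simp
qed

lemma e2: "(-1::real)^s * ((-1)^(s+k) * a * b * x^k) = a * b * (-x)^k"
proof -
  have "a * b * (-x)^k = a * b * (((-1)^s * (-1)^(s+k)) * x^k)" unfolding power_minus[of x] e1 ..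
  then show ?thesis by (simp only: mult_ac)
qed

lemma shifted_legendre_nonpos:
  assumes "x \<le> 0" shows "shifted_legendre s x \<noteq> 0"
proof -
  have "(-1)^s * shifted_legendre s x = (\<Sum>k\<le>s. real (s choose k) * real ((s+k) choose k) * (-x)^k)"
    unfolding shifted_legendre_def sum_distrib_left by (rule sum.cong) (rule refl, rule e2)
  also have "\<dots> \<ge> real (s choose 0) * real ((s+0) choose 0) * (-x)^0"
    by (rule member_le_sum[of 0, where f="\<lambda>k. real (s choose k) * real ((s+k) choose k) * (-x)^k"]) (use assms in auto)
  finally have "(-1)^s * shifted_legendre s x \<ge> 1" by simp
  then show ?thesis by auto
qed




definition lb :: "nat \<Rightarrow> (nat \<Rightarrow> real) \<Rightarrow> nat \<Rightarrow> real poly" where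
  "lb s c k = smult (1 / lagr_q s c k (c k)) (\<Prod>j\<in>{..<s}-{k}. [:- c j, 1:])"

context
  fixes s :: nat and c :: "nat \<Rightarrow> real"
  assumes nodes: "gl_nodes s c" and s1: "s \<ge> 1"
begin

lemma c_inj: "inj_on c {..<s}"
  using nodes unfolding gl_nodes_def by (auto intro: strict_mono_on_imp_inj_on)

lemma c_neq: "i < s \<Longrightarrow> j < s \<Longrightarrow> i \<noteq> j \<Longrightarrow> c i \<noteq> c j"
  using c_inj by (auto dest: inj_onD)

lemma lq_nz: "k < s \<Longrightarrow> lagr_q s c k (c k) \<noteq> 0"
  unfolding lagr_q_def using c_neq by (auto simp: prod_zero_iff)

lemma poly_lb: "poly (lb s c k) x = lagr_q s c k x / lagr_q s c k (c k)"
  unfolding lb_def lagr_q_def by (simp add: poly_prod)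

lemma lb_delta: "i < s \<Longrightarrow> k < s \<Longrightarrow> poly (lb s c k) (c i) = (if i = k then 1 else 0)"
  unfolding poly_lb using lq_nz by (auto simp: lagr_q_def prod_zero_iff)

lemma degree_lb: assumes "k < s" shows "degree (lb s c k) \<le> s - 1"
proof -
  have "degree (\<Prod>j\<in>{..<s}-{k}. [:- c j, 1:]) \<le> sum (degree \<circ> (\<lambda>j. [:- c j, 1:])) ({..<s}-{k})"
    by (rule degree_prod_sum_le) simp
  also have "\<dots> = card ({..<s}-{k})" by simp
  also have "\<dots> \<le> s - 1" using assms by auto
  finally show ?thesis unfolding lb_def using degree_smult_le order_trans by blast
qed

lemma degree_smult_lb: "k < s \<Longrightarrow> degree (smult a (lb s c k)) \<le> s - 1"
  using degree_lb degree_smult_le order_trans by blast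

lemma b_eq: "gl_b s c k = J (lb s c k)"
proof -
  have "poly (lb s c k) = (\<lambda>\<sigma>. lagr_q s c k \<sigma> / lagr_q s c k (c k))" by (rule ext) (rule poly_lb)
  then show ?thesis unfolding gl_b_def J_def by simp
qed

abbreviation "DD \<equiv> (pderiv ^^ s) (W s)"

lemma DD_zero: "i < s \<Longrightarrow> poly DD (c i) = 0"
  using nodes unfolding gl_nodes_def poly_D by simp

lemma DD_nz: "DD \<noteq> 0"
  using degree_D[of s] s1 by auto

lemma roots_zero:
  assumes "degree (m::real poly) < s" "\<And>i. i < s \<Longrightarrow> poly m (c i) = 0"
  shows "m = 0"
proof (rule ccontr)
  assume nz: "m \<noteq> 0"
  have "c ` {..<s} \<subseteq> {x. poly m x = 0}" using assms(2) by auto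
  then have "card (c ` {..<s}) \<le> card {x. poly m x = 0}"
    by (intro card_mono poly_roots_finite nz)
  also have "\<dots> \<le> degree m" by (rule card_poly_roots_bound[OF nz])
  finally show False using card_image[OF c_inj] assms(1) by simp
qed

lemma quad:
  assumes "degree p \<le> 2 * s - 1"
  shows "J p = (\<Sum>k<s. gl_b s c k * poly p (c k))"
proof -
  define r where "r = (\<Sum>k<s. smult (poly p (c k)) (lb s c k))"
  have dr: "degree r \<le> s - 1" unfolding r_def
    by (intro degree_sum_le) (auto simp: degree_lb[simplified])
  have pr: "poly r (c i) = poly p (c i)" if "i < s" for i
  proof -
    have "poly r (c i) = (\<Sum>k<s. if i = k then poly p (c k) else 0)"
      unfolding r_def poly_sum poly_smult by (rule sum.cong) (use that in \<open>auto simp: lb_delta\<close>)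
    also have "\<dots> = poly p (c i)" using that by simp
    finally show ?thesis .
  qed
  define e where "e = p - r"
  have de: "degree e \<le> 2 * s - 1" unfolding e_def using degree_diff_le_max[of p r] assms dr by auto
  have ez: "poly e (c i) = 0" if "i < s" for i unfolding e_def using pr[OF that] by simp
  define q where "q = e div DD"
  define m where "m = e mod DD"
  have eqm: "e = q * DD + m" unfolding q_def m_def by simp
  have "m = 0"
  proof (rule roots_zero)
    show "degree m < s"
    proof (cases "m = 0")
      case False then show ?thesis using degree_mod_less'[OF DD_nz False[unfolded m_def]] degree_D m_def by simp
    qed (use s1 in simp)
    show "poly m (c i) = 0" if "i < s" for i
      using ez[OF that] DD_zero[OF that] eqm by (metis add_0 mult_zero_right poly_add poly_mult)
  qed
  then have eq: "e = DD * q" using eqm by simp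
  have dq: "degree q < s"
  proof (cases "q = 0")
    case False
    then have "degree e = s + degree q" unfolding eq using DD_nz by (simp add: degree_mult_eq degree_D)
    then show ?thesis using de s1 by simp
  qed (use s1 in simp)
  have Je: "J e = 0" unfolding eq by (rule W_orth[OF dq])
  have "J p = J r + J e" unfolding e_def by (simp add: J_diff)
  also have "\<dots> = (\<Sum>k<s. poly p (c k) * gl_b s c k)"
    unfolding Je r_def by (simp add: J_sum J_smult b_eq)
  finally show ?thesis by (simp add: mult.commute)
qed

lemma b_nonneg: "k < s \<Longrightarrow> gl_b s c k \<ge> 0"
proof -
  assume k: "k < s"
  have "degree (lb s c k * lb s c k) \<le> 2 * s - 1"
    using degree_mult_le[of "lb s c k" "lb s c k"] degree_lb[OF k] s1 by linarith
  then have "J (lb s c k * lb s c k) = (\<Sum>i<s. gl_b s c i * (poly (lb s c k) (c i) * poly (lb s c k) (c i)))"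
    by (simp add: quad)
  also have "\<dots> = (\<Sum>i<s. if i = k then gl_b s c i else 0)"
    by (rule sum.cong) (auto simp: lb_delta k)
  also have "\<dots> = gl_b s c k" using k by simp
  finally have "gl_b s c k = J (lb s c k * lb s c k)" by simp
  also have "\<dots> \<ge> 0" unfolding J_def
    by (rule integral_nonneg) auto
  finally show ?thesis .
qed

lemma c_pos: "i < s \<Longrightarrow> c i > 0"
  using nodes shifted_legendre_nonpos unfolding gl_nodes_def by (meson not_less)

end

lemma pderiv_sum: "pderiv (sum f A) = (\<Sum>x\<in>A. pderiv (f x))"
  using higher_pderiv_sum[of 1 f A] by simp

lemma antideriv: "\<exists>P. pderiv P = (p::real poly) \<and> degree P \<le> degree p + 1"
proof -
  define P where "P = (\<Sum>i\<le>degree p. monom (coeff p i / (real i + 1)) (Suc i))"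
  have m: "pderiv (monom (coeff p i / (real i + 1)) (Suc i)) = monom (coeff p i) i" for i
  proof -
    have "real (Suc i) * (coeff p i / (real i + 1)) = coeff p i" by (simp add: field_simps)
    then show ?thesis by (simp only: pderiv_monom diff_Suc_1)
  qed
  have "pderiv P = (\<Sum>i\<le>degree p. monom (coeff p i) i)"
    unfolding P_def pderiv_sum m ..
  also have "\<dots> = p" by (rule poly_as_sum_of_monoms)
  finally have "pderiv P = p" .
  moreover have "degree P \<le> degree p + 1" unfolding P_def
    by (intro degree_sum_le) (auto intro: order_trans[OF degree_monom_le])
  ultimately show ?thesis by blast
qed




context
  fixes s :: nat and c :: "nat \<Rightarrow> real"
  assumes nodes: "gl_nodes s c" and s1: "s \<ge> 1"
begin

lemma antideriv_lb:
  assumes "k < s"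
  shows "\<exists>L. pderiv L = lb s c k \<and> poly L 0 = 0 \<and> degree L \<le> s"
proof -
  obtain P where P: "pderiv P = lb s c k" "degree P \<le> degree (lb s c k) + 1"
    using antideriv by blast
  define L where "L = P - [:poly P 0:]"
  have "pderiv L = lb s c k" unfolding L_def by (simp add: pderiv_diff P pderiv_pCons)
  moreover have "poly L 0 = 0" unfolding L_def by simp
  moreover have "degree L \<le> s"
  proof -
    have "degree L \<le> max (degree P) (degree [:poly P 0:])" unfolding L_def by (rule degree_diff_le_max)
    then show ?thesis using P(2) degree_lb[OF nodes s1 assms] s1 by simp
  qed
  ultimately show ?thesis by blast
qed

lemma a_eq:
  assumes "i < s" "pderiv L = lb s c j" "poly L 0 = 0"
  shows "gl_a s c i j = poly L (c i)"
proof -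
  have "poly (lb s c j) = (\<lambda>\<sigma>. lagr_q s c j \<sigma> / lagr_q s c j (c j))" by (rule ext) (rule poly_lb[OF nodes s1])
  then have "gl_a s c i j = integral {0..c i} (poly (pderiv L))" unfolding gl_a_def assms(2) by simp
  also have "\<dots> = poly L (c i)" using integral_pderiv[of 0 "c i" L] c_pos[OF nodes s1 assms(1)] assms(3) by simp
  finally show ?thesis .
qed

lemma b_eq2:
  assumes "pderiv L = lb s c j" "poly L 0 = 0"
  shows "gl_b s c j = poly L 1"
  using b_eq[OF nodes s1, of j] J_pderiv[of L] assms by simp

lemma gl_sympl:
  assumes i: "i < s" and j: "j < s"
  shows "gl_b s c i * gl_a s c i j + gl_b s c j * gl_a s c j i = gl_b s c i * gl_b s c j"
proof -
  obtain Li where Li: "pderiv Li = lb s c i" "poly Li 0 = 0" "degree Li \<le> s"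
    using antideriv_lb[OF i] by blast
  obtain Lj where Lj: "pderiv Lj = lb s c j" "poly Lj 0 = 0" "degree Lj \<le> s"
    using antideriv_lb[OF j] by blast
  define g where "g = pderiv (Li * Lj)"
  have dg: "degree g \<le> 2 * s - 1"
  proof -
    have "degree (Li * Lj) \<le> 2 * s" using degree_mult_le[of Li Lj] Li(3) Lj(3) by linarith
    then show ?thesis unfolding g_def degree_pderiv by linarith
  qed
  have "J g = poly Li 1 * poly Lj 1" unfolding g_def J_pderiv using Li Lj by simp
  also have "\<dots> = gl_b s c i * gl_b s c j" using b_eq2 Li Lj by simp
  finally have 1: "J g = gl_b s c i * gl_b s c j" .
  have "J g = (\<Sum>k<s. gl_b s c k * poly g (c k))" by (rule quad[OF nodes s1 dg])
  also have "\<dots> = (\<Sum>k<s. (if k = j then gl_b s c j * poly Li (c j) else 0)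
                         + (if k = i then gl_b s c i * poly Lj (c i) else 0))"
    unfolding g_def pderiv_mult Li Lj
    by (rule sum.cong) (auto simp: lb_delta[OF nodes s1] i j algebra_simps)
  also have "\<dots> = gl_b s c j * poly Li (c j) + gl_b s c i * poly Lj (c i)"
    using i j by (simp add: sum.distrib)
  also have "\<dots> = gl_b s c j * gl_a s c j i + gl_b s c i * gl_a s c i j"
    using a_eq[OF i Lj(1,2)] a_eq[OF j Li(1,2)] by simp
  finally show ?thesis using 1 by simp
qed

end




lemma bsym:
  fixes S :: "real^'m^'m"
  assumes "transpose S = S"
  shows "u \<bullet> (S *v v) = v \<bullet> (S *v u)"
proof -
  have "u \<bullet> (S *v v) = (u v* S) \<bullet> v" by (simp add: dot_lmul_matrix)
  also have "u v* S = S *v u" by (metis assms transpose_matrix_vector)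
  finally show ?thesis by (simp add: inner_commute)
qed

lemma b_add_r: "u \<bullet> ((S::real^'m^'m) *v (v + w)) = u \<bullet> (S *v v) + u \<bullet> (S *v w)"
  by (simp add: matrix_vector_right_distrib inner_add_right)

lemma b_scale_r: "u \<bullet> ((S::real^'m^'m) *v (r *\<^sub>R v)) = r * (u \<bullet> (S *v v))"
  by (simp add: matrix_vector_mult_scaleR)

lemma b_sum_r: "u \<bullet> ((S::real^'m^'m) *v (\<Sum>i\<in>A. f i)) = (\<Sum>i\<in>A. u \<bullet> (S *v f i))"
proof -
  have "S *v (\<Sum>i\<in>A. f i) = (\<Sum>i\<in>A. S *v f i)"
    using linear_sum[OF matrix_vector_mul_linear[of S]] by simp
  then show ?thesis by (simp add: inner_sum_right)
qed

lemma b_add_l: "(u + w) \<bullet> ((S::real^'m^'m) *v v) = u \<bullet> (S *v v) + w \<bullet> (S *v v)"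
  by (simp add: inner_add_left)

lemma b_diff_l: "(u - w) \<bullet> ((S::real^'m^'m) *v v) = u \<bullet> (S *v v) - w \<bullet> (S *v v)"
  by (simp add: inner_diff_left)

lemma b_scale_l: "(r *\<^sub>R u) \<bullet> ((S::real^'m^'m) *v v) = r * (u \<bullet> (S *v v))"
  by simp

lemma b_sum_l: "(\<Sum>i\<in>A. f i) \<bullet> ((S::real^'m^'m) *v v) = (\<Sum>i\<in>A. f i \<bullet> (S *v v))"
  by (simp add: inner_sum_left)

lemma expand:
  fixes S :: "real^'m^'m" and Ekin :: "real^'m \<Rightarrow> real"
  assumes lin: "linear Ekin" and sym: "transpose S = S"
  shows "Ekin (x + t *\<^sub>R v) + (x + t *\<^sub>R v) \<bullet> (S *v (x + t *\<^sub>R v))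
     = (Ekin x + x \<bullet> (S *v x)) + t * (Ekin v + 2 * (x \<bullet> (S *v v))) + t^2 * (v \<bullet> (S *v v))"
proof -
  have "Ekin (x + t *\<^sub>R v) = Ekin x + t * Ekin v"
    using lin by (simp add: linear_add linear_scale)
  moreover have "(x + t *\<^sub>R v) \<bullet> (S *v (x + t *\<^sub>R v)) =
      x \<bullet> (S *v x) + t * (x \<bullet> (S *v v)) + t * (v \<bullet> (S *v x)) + t^2 * (v \<bullet> (S *v v))"
    by (simp add: b_add_r b_add_l b_scale_r power2_eq_square algebra_simps)
  moreover have "v \<bullet> (S *v x) = x \<bullet> (S *v v)" using bsym[OF sym] by simp
  ultimately show ?thesis by (simp add: algebra_simps)
qed

theorem proposition1:
  fixes F :: "real^'m \<Rightarrow> real^'m"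
    and Ekin Ebnd Ejump :: "real^'m \<Rightarrow> real"
    and S :: "real^'m^'m"
    and s K :: nat and c :: "nat \<Rightarrow> real" and dt :: real
    and y :: "nat \<Rightarrow> real^'m" and Y :: "nat \<Rightarrow> nat \<Rightarrow> real^'m"
  defines "Etot \<equiv> (\<lambda>x. Ekin x + x \<bullet> (S *v x))"
  assumes lin_kin: "linear Ekin"
    and S_sym: "transpose S = S"
    and lin_bnd: "linear Ebnd"
    and jump_nonneg: "\<And>x. Ejump x \<ge> 0"
    and energy_law: "\<And>x. ((\<lambda>t. Etot (x + t *\<^sub>R F x)) has_real_derivative
                              (- Ebnd x - Ejump x)) (at 0)"
    and s_pos: "s \<ge> 1"
    and nodes: "gl_nodes s c"
    and dt_pos: "dt > 0"
    and stages: "\<And>\<tau> i. \<tau> < K \<Longrightarrow> i < s \<Longrightarrow>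
                   Y \<tau> i = y \<tau> + dt *\<^sub>R (\<Sum>j<s. gl_a s c i j *\<^sub>R F (Y \<tau> j))"
    and step: "\<And>\<tau>. \<tau> < K \<Longrightarrow>
                   y (Suc \<tau>) = y \<tau> + dt *\<^sub>R (\<Sum>i<s. gl_b s c i *\<^sub>R F (Y \<tau> i))"
  shows "\<forall>\<tau><K. Etot (y (Suc \<tau>)) - Etot (y \<tau>)
                + dt * (\<Sum>i<s. gl_b s c i * Ebnd (Y \<tau> i)) \<le> 0"
proof (intro allI impI)
  fix \<tau> assume tau: "\<tau> < K"
  define B where "B u v = u \<bullet> (S *v v)" for u v
  have Bsym: "B u v = B v u" for u v unfolding B_def by (rule bsym[OF S_sym])
  have Etot_exp: "Etot (x + t *\<^sub>R v) = Etot x + t * (Ekin v + 2 * B x v) + t^2 * B v v" for x v t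
    unfolding Etot_def B_def by (rule expand[OF lin_kin S_sym])
  have law: "Ekin (F x) + 2 * B x (F x) = - Ebnd x - Ejump x" for x
  proof -
    have "((\<lambda>t. Etot x + t * (Ekin (F x) + 2 * B x (F x)) + t^2 * B (F x) (F x)) has_real_derivative
            (Ekin (F x) + 2 * B x (F x))) (at 0)"
      by (auto intro!: derivative_eq_intros)
    moreover have "((\<lambda>t. Etot x + t * (Ekin (F x) + 2 * B x (F x)) + t^2 * B (F x) (F x)) has_real_derivative
            (- Ebnd x - Ejump x)) (at 0)"
      using energy_law[of x] unfolding Etot_exp .
    ultimately show ?thesis by (rule DERIV_unique)
  qed
  define b where "b i = gl_b s c i" for i
  define a where "a i j = gl_a s c i j" for i j
  define G where "G i = F (Y \<tau> i)" for i
  define Z where "Z i = Y \<tau> i" for i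
  define V where "V = (\<Sum>i<s. b i *\<^sub>R G i)"
  have y1: "y (Suc \<tau>) = y \<tau> + dt *\<^sub>R V" unfolding V_def b_def G_def using step[OF tau] .
  have Zi: "y \<tau> = Z i - dt *\<^sub>R (\<Sum>j<s. a i j *\<^sub>R G j)" if "i < s" for i
    unfolding Z_def a_def G_def using stages[OF tau that] by simp
  have bnn: "b i \<ge> 0" if "i < s" for i unfolding b_def using b_nonneg[OF nodes s_pos that] .
  have sympl: "b i * a i j + b j * a j i = b i * b j" if "i < s" "j < s" for i j
    unfolding a_def b_def using gl_sympl[OF nodes s_pos that] .
  define T where "T = (\<Sum>i<s. \<Sum>j<s. b i * a i j * B (G j) (G i))"
  have kinV: "Ekin V = (\<Sum>i<s. b i * Ekin (G i))"
    unfolding V_def using lin_kin by (simp add: linear_sum linear_scale)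
  have By0V: "B (y \<tau>) V = (\<Sum>i<s. b i * B (Z i) (G i)) - dt * T"
  proof -
    have "B (y \<tau>) V = (\<Sum>i<s. b i * B (y \<tau>) (G i))"
      unfolding V_def B_def by (simp add: b_sum_r b_scale_r)
    also have "\<dots> = (\<Sum>i<s. b i * B (Z i) (G i) - dt * (\<Sum>j<s. b i * a i j * B (G j) (G i)))"
    proof (rule sum.cong)
      fix i assume i: "i \<in> {..<s}"
      have "B (y \<tau>) (G i) = B (Z i) (G i) - dt * (\<Sum>j<s. a i j * B (G j) (G i))"
        unfolding Zi[OF i[simplified]] B_def by (simp add: b_diff_l b_sum_l)
      then have "b i * B (y \<tau>) (G i) = b i * B (Z i) (G i) - dt * (b i * (\<Sum>j<s. a i j * B (G j) (G i)))"
        by (simp only: right_diff_distrib mult.left_commute[of "b i" dt])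
      then show "b i * B (y \<tau>) (G i) = b i * B (Z i) (G i) - dt * (\<Sum>j<s. b i * a i j * B (G j) (G i))"
        by (simp add: sum_distrib_left mult.assoc)
    qed simp
    also have "\<dots> = (\<Sum>i<s. b i * B (Z i) (G i)) - dt * T"
      unfolding T_def by (simp add: sum_subtractf sum_distrib_left)
    finally show ?thesis .
  qed
  have BVV: "B V V = 2 * T"
  proof -
    have "B V V = (\<Sum>i<s. \<Sum>j<s. b i * b j * B (G j) (G i))"
      unfolding V_def B_def by (simp add: b_sum_r b_scale_r b_sum_l sum_distrib_left mult_ac)
    also have "\<dots> = (\<Sum>i<s. \<Sum>j<s. b i * a i j * B (G j) (G i) + b j * a j i * B (G j) (G i))"
      by (intro sum.cong refl) (simp add: sympl[symmetric] algebra_simps)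
    also have "\<dots> = T + (\<Sum>i<s. \<Sum>j<s. b j * a j i * B (G j) (G i))"
      unfolding T_def by (simp add: sum.distrib)
    also have "(\<Sum>i<s. \<Sum>j<s. b j * a j i * B (G j) (G i)) = (\<Sum>j<s. \<Sum>i<s. b j * a j i * B (G j) (G i))"
      by (rule sum.swap)
    also have "\<dots> = T"
      unfolding T_def by (intro sum.cong refl) (simp add: Bsym)
    finally show ?thesis by simp
  qed
  have diff: "Etot (y (Suc \<tau>)) - Etot (y \<tau>) = dt * (\<Sum>i<s. b i * (Ekin (G i) + 2 * B (Z i) (G i)))"
  proof -
    have "Etot (y (Suc \<tau>)) - Etot (y \<tau>) = dt * (Ekin V + 2 * B (y \<tau>) V) + dt^2 * B V V"
      unfolding y1 Etot_exp by simp
    also have "\<dots> = dt * (\<Sum>i<s. b i * Ekin (G i)) + 2 * dt * (\<Sum>i<s. b i * B (Z i) (G i))"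
      unfolding kinV By0V BVV by (simp add: algebra_simps power2_eq_square)
    also have "\<dots> = dt * (\<Sum>i<s. b i * (Ekin (G i) + 2 * B (Z i) (G i)))"
      by (simp add: algebra_simps sum.distrib sum_distrib_left)
    finally show ?thesis .
  qed
  have le: "(\<Sum>i<s. b i * (Ekin (G i) + 2 * B (Z i) (G i))) \<le> (\<Sum>i<s. - (b i * Ebnd (Z i)))"
  proof (rule sum_mono)
    fix i assume i: "i \<in> {..<s}"
    have "Ekin (G i) + 2 * B (Z i) (G i) = - Ebnd (Z i) - Ejump (Z i)"
      unfolding G_def Z_def by (rule law)
    then have "Ekin (G i) + 2 * B (Z i) (G i) \<le> - Ebnd (Z i)" using jump_nonneg[of "Z i"] by simp
    then have "b i * (Ekin (G i) + 2 * B (Z i) (G i)) \<le> b i * (- Ebnd (Z i))"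
      by (rule mult_left_mono) (use bnn i in simp)
    then show "b i * (Ekin (G i) + 2 * B (Z i) (G i)) \<le> - (b i * Ebnd (Z i))"
      by simp
  qed
  have "Etot (y (Suc \<tau>)) - Etot (y \<tau>) \<le> dt * (\<Sum>i<s. - (b i * Ebnd (Z i)))"
    unfolding diff by (rule mult_left_mono[OF le]) (use dt_pos in simp)
  then show "Etot (y (Suc \<tau>)) - Etot (y \<tau>) + dt * (\<Sum>i<s. gl_b s c i * Ebnd (Y \<tau> i)) \<le> 0"
    unfolding b_def Z_def by (simp add: sum_negf)
qed


end
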